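(* The problem \textsc{Diameter} is $2$-GP-hard with respect to the combined parameter ``bisection width plus minimum degree''. That is, there is an algorithm that, given any undirected connected unweighted graph $G$ (with $n$ vertices and $m$ edges) and integer $t$, runs in $O(n+m)$ time and outputs an undirected connected unweighted graph $G'$ and integer $t'$ such that $d(G)\ge t$ if and only if $d(G')\ge t'$, the size of $(G',t')$ is $O(n+m)$, and the bisection width of $G'$ plus the minimum degree of $G'$ is at most $2$.
   Context: \textsc{Diameter}: given an undirected, connected, unweighted graph $G$, compute its diameter $d(G)$, the length of a longest shortest path; its decision version asks, given $G$ and integer $t$, whether $d(G)\ge t$. A parameterized problem $P$ with associated unparameterized problem $\hat P$ is $\ell$-GP-hard if there is an algorithm transforming any instance $I$ of $\hat P$ into an instance $(I',k')$ of $P$ in time linear in $|I|$, such that $I\in\hat P\iff (I',k')\in P$, $k'\le\ell$, and $|I'|\in O(|I|)$. The bisection width of a graph is the minimum number of edges to delete in order to partition its vertex set into two parts whose sizes differ by at most one with no edges between them. *)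

theory Defs
  imports Main
begin

text \<open>A graph is given by a number of vertices n (vertex set {0..<n}) and an edge list es
  of pairs of vertices; edges are undirected.\<close>

definition adj :: "(nat \<times> nat) list \<Rightarrow> nat \<Rightarrow> nat \<Rightarrow> bool" where
  "adj es u v \<longleftrightarrow> (u, v) \<in> set es \<or> (v, u) \<in> set es"

definition wf_graph :: "nat \<Rightarrow> (nat \<times> nat) list \<Rightarrow> bool" where
  "wf_graph n es \<longleftrightarrow>
     (\<forall>(u, v) \<in> set es. u < n \<and> v < n \<and> u \<noteq> v) \<and>
     (\<forall>i < length es. \<forall>j < length es. i \<noteq> j \<longrightarrow>
        es ! i \<noteq> es ! j \<and> es ! i \<noteq> prod.swap (es ! j))"

definition connected_graph :: "nat \<Rightarrow> (nat \<times> nat) list \<Rightarrow> bool" where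
  "connected_graph n es \<longleftrightarrow> 0 < n \<and> (\<forall>u < n. \<forall>v < n. (adj es)\<^sup>*\<^sup>* u v)"

definition dist :: "(nat \<times> nat) list \<Rightarrow> nat \<Rightarrow> nat \<Rightarrow> nat" where
  "dist es u v = (LEAST k. (adj es ^^ k) u v)"

definition diameter :: "nat \<Rightarrow> (nat \<times> nat) list \<Rightarrow> nat" where
  "diameter n es = Max {dist es u v | u v. u < n \<and> v < n}"

definition min_degree :: "nat \<Rightarrow> (nat \<times> nat) list \<Rightarrow> nat" where
  "min_degree n es = Min ((\<lambda>v. card {u. adj es v u}) ` {..<n})"

definition cut_size :: "(nat \<times> nat) list \<Rightarrow> nat set \<Rightarrow> nat" where
  "cut_size es S = card {e \<in> set es. (fst e \<in> S) \<noteq> (snd e \<in> S)}"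

definition bisection_width :: "nat \<Rightarrow> (nat \<times> nat) list \<Rightarrow> nat" where
  "bisection_width n es = Min {cut_size es S | S. S \<subseteq> {..<n} \<and>
       card S \<le> card ({..<n} - S) + 1 \<and> card ({..<n} - S) \<le> card S + 1}"

fun bitlen :: "nat \<Rightarrow> nat" where
  "bitlen n = (if n = 0 then 0 else Suc (bitlen (n div 2)))"

definition inst_size :: "nat \<Rightarrow> (nat \<times> nat) list \<Rightarrow> int \<Rightarrow> nat" where
  "inst_size n es t = n + length es + bitlen (nat \<bar>t\<bar>)"

text \<open>Memory cells indexed by naturals holding integers; indirect addressing;
  addition, subtraction, conditional jumps.  Each instruction costs one step.\<close>
datatype instr =
    LoadConst nat int
  | Add nat nat nat
  | Sub nat nat nat
  | Load nat nat
  | Store nat nat            (* mem (mem a) := mem r, args: a r *)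
  | Jz nat nat
  | Jneg nat nat
  | Halt

type_synonym state = "nat \<times> (nat \<Rightarrow> int)"

definition halted :: "instr list \<Rightarrow> state \<Rightarrow> bool" where
  "halted P s \<longleftrightarrow> length P \<le> fst s \<or> P ! fst s = Halt"

definition step :: "instr list \<Rightarrow> state \<Rightarrow> state" where
  "step P s = (if halted P s then s else
     (let pc = fst s; m = snd s in
      case P ! pc of
        LoadConst r c \<Rightarrow> (Suc pc, m(r := c))
      | Add r a b \<Rightarrow> (Suc pc, m(r := m a + m b))
      | Sub r a b \<Rightarrow> (Suc pc, m(r := m a - m b))
      | Load r a \<Rightarrow> (Suc pc, m(r := m (nat (m a))))
      | Store a r \<Rightarrow> (Suc pc, m(nat (m a) := m r))
      | Jz r l \<Rightarrow> (if m r = 0 then l else Suc pc, m)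
      | Jneg r l \<Rightarrow> (if m r < 0 then l else Suc pc, m)
      | Halt \<Rightarrow> s))"

definition steps :: "instr list \<Rightarrow> nat \<Rightarrow> state \<Rightarrow> state" where
  "steps P k s = (step P ^^ k) s"

definition encode :: "nat \<Rightarrow> (nat \<times> nat) list \<Rightarrow> int \<Rightarrow> nat \<Rightarrow> int" where
  "encode n es t a =
     (if a = 0 then int n
      else if a = 1 then int (length es)
      else if a = 2 then t
      else if 3 \<le> a \<and> a < 3 + 2 * length es then
        (if even (a - 3) then int (fst (es ! ((a - 3) div 2)))
         else int (snd (es ! ((a - 3) div 2))))
      else 0)"

definition init_state :: "nat \<Rightarrow> (nat \<times> nat) list \<Rightarrow> int \<Rightarrow> state" where
  "init_state n es t = (0, encode n es t)"

text \<open>Output is read from the memory with the same layout.\<close>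
definition decode :: "(nat \<Rightarrow> int) \<Rightarrow> nat \<times> (nat \<times> nat) list \<times> int" where
  "decode m = (nat (m 0),
               map (\<lambda>i. (nat (m (3 + 2 * i)), nat (m (4 + 2 * i)))) [0..<nat (m 1)],
               m 2)"

end

theory Submission
  imports Defs
begin

declare One_nat_def [simp del]
definition prog :: "instr list" where
  "prog = [Add 1 1 0, Add 1 1 0, Add 1 1 0, Add 1 1 0, Add 1 1 0, Add 1 1 0, Add 1 1 0, Add 1 1 0, Add 1 1 0, Add 0 0 1, Add 0 0 1, Store 0 2, Sub 2 0 1, Sub 2 2 1, Sub 1 1 2, Sub 1 1 2, Sub 1 1 2, Sub 1 1 2, Add 0 0 2, Add 0 0 2, Add 0 0 2, Store 0 1, Sub 1 1 2, Sub 1 1 2, Sub 1 1 2, Sub 1 1 2, Sub 1 1 2, Add 1 1 1, LoadConst 0 3, Add 0 0 1, LoadConst 1 0, Store 0 1, LoadConst 1 1, Add 0 0 1, Store 0 2, Add 0 0 1, Add 2 2 2, Sub 2 2 1, Store 0 2, Load 1 0, Jz 1 64, LoadConst 2 1, Sub 1 1 2, LoadConst 2 2, Add 2 0 2, Store 2 1, LoadConst 2 2, Sub 2 0 2, Load 1 2, LoadConst 2 1, Add 1 1 2, Store 0 1, LoadConst 2 1, Add 0 0 2, LoadConst 2 2, Sub 2 0 2, Load 1 2, LoadConst 2 1, Add 1 1 2, Store 0 1, LoadConst 2 1, Add 0 0 2, LoadConst 2 0, Jz 2 39, LoadConst 1 0, Store 0 1, LoadConst 2 1, Sub 2 0 2,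 Load 2 2, LoadConst 1 1, Add 2 2 1, Add 0 0 1, Store 0 2, Add 0 0 1, Store 0 2, Add 0 0 1, Add 2 2 1, Store 0 2, Add 0 0 1, Sub 2 2 1, Sub 2 2 1, Store 0 2, Load 1 0, Jz 1 107, LoadConst 2 1, Sub 1 1 2, LoadConst 2 2, Add 2 0 2, Store 2 1, LoadConst 2 2, Sub 2 0 2, Load 1 2, LoadConst 2 0, Add 1 1 2, Store 0 1, LoadConst 2 1, Add 0 0 2, LoadConst 2 2, Sub 2 0 2, Load 1 2, LoadConst 2 1, Add 1 1 2, Store 0 1, LoadConst 2 1, Add 0 0 2, LoadConst 2 0, Jz 2 82, LoadConst 1 1, Sub 2 0 1, Load 2 2, Add 2 2 1, Store 0 2, LoadConst 2 2, Sub 2 0 2, Load 2 2, Add 1 2 2, Add 1 1 2, Add 1 1 0, LoadConst 2 5, Sub 1 1 2, Load 2 1, LoadConst 1 4, Add 2 2 1, LoadConst 1 1, Add 1 0 1, Store 1 2, LoadConst 2 2, Sub 2 0 2, Load 2 2, Add 1 2 2, Add 1 1 1, Add 1 1 0, LoadConst 2 5, Sub 1 1 2, Load 1 1, LoadConst 2 1, Add 1 1 2, LoadConst 2 1, Add 2 0 2, Load 2 2, Load 0 0, Halt]"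

lemma length_prog: "length prog = 142" by (simp add: prog_def)

lemma prog_nth:
  "prog ! 0 = Add 1 1 0"
  "prog ! 1 = Add 1 1 0"
  "prog ! 2 = Add 1 1 0"
  "prog ! 3 = Add 1 1 0"
  "prog ! 4 = Add 1 1 0"
  "prog ! 5 = Add 1 1 0"
  "prog ! 6 = Add 1 1 0"
  "prog ! 7 = Add 1 1 0"
  "prog ! 8 = Add 1 1 0"
  "prog ! 9 = Add 0 0 1"
  "prog ! 10 = Add 0 0 1"
  "prog ! 11 = Store 0 2"
  "prog ! 12 = Sub 2 0 1"
  "prog ! 13 = Sub 2 2 1"
  "prog ! 14 = Sub 1 1 2"
  "prog ! 15 = Sub 1 1 2"
  "prog ! 16 = Sub 1 1 2"
  "prog ! 17 = Sub 1 1 2"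
  "prog ! 18 = Add 0 0 2"
  "prog ! 19 = Add 0 0 2"
  "prog ! 20 = Add 0 0 2"
  "prog ! 21 = Store 0 1"
  "prog ! 22 = Sub 1 1 2"
  "prog ! 23 = Sub 1 1 2"
  "prog ! 24 = Sub 1 1 2"
  "prog ! 25 = Sub 1 1 2"
  "prog ! 26 = Sub 1 1 2"
  "prog ! 27 = Add 1 1 1"
  "prog ! 28 = LoadConst 0 3"
  "prog ! 29 = Add 0 0 1"
  "prog ! 30 = LoadConst 1 0"
  "prog ! 31 = Store 0 1"
  "prog ! 32 = LoadConst 1 1"
  "prog ! 33 = Add 0 0 1"
  "prog ! 34 = Store 0 2"
  "prog ! 35 = Add 0 0 1"
  "prog ! 36 = Add 2 2 2"
  "prog ! 37 = Sub 2 2 1"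
  "prog ! 38 = Store 0 2"
  "prog ! 39 = Load 1 0"
  "prog ! 40 = Jz 1 64"
  "prog ! 41 = LoadConst 2 1"
  "prog ! 42 = Sub 1 1 2"
  "prog ! 43 = LoadConst 2 2"
  "prog ! 44 = Add 2 0 2"
  "prog ! 45 = Store 2 1"
  "prog ! 46 = LoadConst 2 2"
  "prog ! 47 = Sub 2 0 2"
  "prog ! 48 = Load 1 2"
  "prog ! 49 = LoadConst 2 1"
  "prog ! 50 = Add 1 1 2"
  "prog ! 51 = Store 0 1"
  "prog ! 52 = LoadConst 2 1"
  "prog ! 53 = Add 0 0 2"
  "prog ! 54 = LoadConst 2 2"
  "prog ! 55 = Sub 2 0 2"
  "prog ! 56 = Load 1 2"
  "prog ! 57 = LoadConst 2 1"
  "prog ! 58 = Add 1 1 2"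
  "prog ! 59 = Store 0 1"
  "prog ! 60 = LoadConst 2 1"
  "prog ! 61 = Add 0 0 2"
  "prog ! 62 = LoadConst 2 0"
  "prog ! 63 = Jz 2 39"
  "prog ! 64 = LoadConst 1 0"
  "prog ! 65 = Store 0 1"
  "prog ! 66 = LoadConst 2 1"
  "prog ! 67 = Sub 2 0 2"
  "prog ! 68 = Load 2 2"
  "prog ! 69 = LoadConst 1 1"
  "prog ! 70 = Add 2 2 1"
  "prog ! 71 = Add 0 0 1"
  "prog ! 72 = Store 0 2"
  "prog ! 73 = Add 0 0 1"
  "prog ! 74 = Store 0 2"
  "prog ! 75 = Add 0 0 1"
  "prog ! 76 = Add 2 2 1"
  "prog ! 77 = Store 0 2"
  "prog ! 78 = Add 0 0 1"
  "prog ! 79 = Sub 2 2 1"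
  "prog ! 80 = Sub 2 2 1"
  "prog ! 81 = Store 0 2"
  "prog ! 82 = Load 1 0"
  "prog ! 83 = Jz 1 107"
  "prog ! 84 = LoadConst 2 1"
  "prog ! 85 = Sub 1 1 2"
  "prog ! 86 = LoadConst 2 2"
  "prog ! 87 = Add 2 0 2"
  "prog ! 88 = Store 2 1"
  "prog ! 89 = LoadConst 2 2"
  "prog ! 90 = Sub 2 0 2"
  "prog ! 91 = Load 1 2"
  "prog ! 92 = LoadConst 2 0"
  "prog ! 93 = Add 1 1 2"
  "prog ! 94 = Store 0 1"
  "prog ! 95 = LoadConst 2 1"
  "prog ! 96 = Add 0 0 2"
  "prog ! 97 = LoadConst 2 2"
  "prog ! 98 = Sub 2 0 2"
  "prog ! 99 = Load 1 2"
  "prog ! 100 = LoadConst 2 1"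
  "prog ! 101 = Add 1 1 2"
  "prog ! 102 = Store 0 1"
  "prog ! 103 = LoadConst 2 1"
  "prog ! 104 = Add 0 0 2"
  "prog ! 105 = LoadConst 2 0"
  "prog ! 106 = Jz 2 82"
  "prog ! 107 = LoadConst 1 1"
  "prog ! 108 = Sub 2 0 1"
  "prog ! 109 = Load 2 2"
  "prog ! 110 = Add 2 2 1"
  "prog ! 111 = Store 0 2"
  "prog ! 112 = LoadConst 2 2"
  "prog ! 113 = Sub 2 0 2"
  "prog ! 114 = Load 2 2"
  "prog ! 115 = Add 1 2 2"
  "prog ! 116 = Add 1 1 2"
  "prog ! 117 = Add 1 1 0"
  "prog ! 118 = LoadConst 2 5"
  "prog ! 119 = Sub 1 1 2"
  "prog ! 120 = Load 2 1"
  "prog ! 121 = LoadConst 1 4"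
  "prog ! 122 = Add 2 2 1"
  "prog ! 123 = LoadConst 1 1"
  "prog ! 124 = Add 1 0 1"
  "prog ! 125 = Store 1 2"
  "prog ! 126 = LoadConst 2 2"
  "prog ! 127 = Sub 2 0 2"
  "prog ! 128 = Load 2 2"
  "prog ! 129 = Add 1 2 2"
  "prog ! 130 = Add 1 1 1"
  "prog ! 131 = Add 1 1 0"
  "prog ! 132 = LoadConst 2 5"
  "prog ! 133 = Sub 1 1 2"
  "prog ! 134 = Load 1 1"
  "prog ! 135 = LoadConst 2 1"
  "prog ! 136 = Add 1 1 2"
  "prog ! 137 = LoadConst 2 1"
  "prog ! 138 = Add 2 0 2"
  "prog ! 139 = Load 2 2"
  "prog ! 140 = Load 0 0"
  "prog ! 141 = Halt"
  by (simp_all add: prog_def)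

fun exec :: "instr \<Rightarrow> nat \<Rightarrow> (nat \<Rightarrow> int) \<Rightarrow> state" where
  "exec (LoadConst r c) pc m = (pc + 1, m(r := c))"
| "exec (Add r a b) pc m = (pc + 1, m(r := m a + m b))"
| "exec (Sub r a b) pc m = (pc + 1, m(r := m a - m b))"
| "exec (Load r a) pc m = (pc + 1, m(r := m (nat (m a))))"
| "exec (Store a r) pc m = (pc + 1, m(nat (m a) := m r))"
| "exec (Jz r l) pc m = (if m r = 0 then l else pc + 1, m)"
| "exec (Jneg r l) pc m = (if m r < 0 then l else pc + 1, m)"
| "exec Halt pc m = (pc, m)"

lemma step_exec: "pc < length P \<Longrightarrow> P ! pc \<noteq> Halt \<Longrightarrow> step P (pc, M) = exec (P ! pc) pc M"
  by (cases "P ! pc") (simp_all add: step_def halted_def)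

definition bnd :: "int \<Rightarrow> (nat \<Rightarrow> int) \<Rightarrow> bool" where
  "bnd V M \<longleftrightarrow> (\<forall>a. \<bar>M a\<bar> \<le> V)"

definition run :: "instr list \<Rightarrow> int \<Rightarrow> state \<Rightarrow> nat \<Rightarrow> state \<Rightarrow> bool" where
  "run P V s k s' \<longleftrightarrow> steps P k s = s' \<and> (\<forall>j\<le>k. bnd V (snd (steps P j s)))"

lemma run_0I: "bnd V (snd s) \<Longrightarrow> s = s' \<Longrightarrow> run P V s 0 s'"
  by (simp add: run_def steps_def)

lemma steps_Suc: "steps P (Suc k) s = steps P k (step P s)"
  by (simp add: steps_def funpow_Suc_right del: funpow.simps)

lemma run_SucI: "bnd V (snd s) \<Longrightarrow> run P V (step P s) k s' \<Longrightarrow> run P V s (Suc k) s'"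
  unfolding run_def
  apply (auto simp: steps_Suc)
  subgoal for j by (cases j) (auto simp: steps_Suc, simp add: steps_def)
  done

lemma run_stepI: "0 < k \<Longrightarrow> run P V (step P s) (k - 1) s' \<Longrightarrow> bnd V (snd s) \<Longrightarrow> run P V s k s'"
  using run_SucI[of V s P "k - 1" s'] by simp

lemma run_trans: "run P V s k1 s1 \<Longrightarrow> run P V s1 k2 s2 \<Longrightarrow> run P V s (k1 + k2) s2"
  unfolding run_def
proof (intro conjI allI impI)
  assume a: "steps P k1 s = s1 \<and> (\<forall>j\<le>k1. bnd V (snd (steps P j s)))"
     and b: "steps P k2 s1 = s2 \<and> (\<forall>j\<le>k2. bnd V (snd (steps P j s1)))"
  have sp: "steps P (i + k1) s = steps P i (steps P k1 s)" for i
    by (simp add: steps_def funpow_add)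
  show "steps P (k1 + k2) s = s2" using a b sp[of k2] by (simp add: add.commute)
  fix j assume "j \<le> k1 + k2"
  show "bnd V (snd (steps P j s))"
  proof (cases "j \<le> k1")
    case True then show ?thesis using a by auto
  next
    case False
    then obtain i where "j = i + k1" "i \<le> k2" using \<open>j \<le> k1 + k2\<close>
      by (metis add.commute le_add_diff_inverse nat_le_linear add_le_cancel_left)
    then show ?thesis using a b sp[of i] by auto
  qed
qed

lemma bnd_upd: "bnd V M \<Longrightarrow> \<bar>v\<bar> \<le> V \<Longrightarrow> bnd V (M(a := v))"
  by (simp add: bnd_def)


lemma bnd_run_helper: "bnd V M \<Longrightarrow> bnd V (snd (k, M))" by simp

lemma iter39:
  assumes r3: "3 \<le> r" and c: "0 < c" and Bp: "B r = a0" "B (Suc r) = b0"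
    and bd: "bnd V B" "\<bar>x\<bar> \<le> V" "\<bar>y\<bar> \<le> V" "int r + 5 \<le> V" "int c \<le> V" "\<bar>a0\<bar> \<le> V - 1" "\<bar>b0\<bar> \<le> V - 1"
  shows "run prog V (39, B(r + 2 := int c, 0 := int (r + 2), 1 := x, 2 := y)) 25
           (39, B(r + 2 := a0 + 1, r + 3 := b0 + 1, r + 4 := int c - 1, 0 := int (r + 4), 1 := b0 + 1, 2 := 0))"
  apply (insert r3 c Bp bd)
  apply (rule run_stepI, simp, simp add: step_exec length_prog prog_nth nat_add_distrib nat_mult_distrib nat_diff_distrib)+
  apply (rule run_0I)
  apply (auto intro!: bnd_upd simp: fun_eq_iff abs_le_iff)
  done

lemma iter82:
  assumes r3: "3 \<le> r" and c: "0 < c" and Bp: "B r = a0" "B (Suc r) = b0"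
    and bd: "bnd V B" "\<bar>x\<bar> \<le> V" "\<bar>y\<bar> \<le> V" "int r + 5 \<le> V" "int c \<le> V" "\<bar>a0\<bar> \<le> V - 1" "\<bar>b0\<bar> \<le> V - 1"
  shows "run prog V (82, B(r + 2 := int c, 0 := int (r + 2), 1 := x, 2 := y)) 25
           (82, B(r + 2 := a0, r + 3 := b0 + 1, r + 4 := int c - 1, 0 := int (r + 4), 1 := b0 + 1, 2 := 0))"
  apply (insert r3 c Bp bd)
  apply (rule run_stepI, simp, simp add: step_exec length_prog prog_nth nat_add_distrib nat_mult_distrib nat_diff_distrib)+
  apply (rule run_0I)
  apply (auto intro!: bnd_upd simp: fun_eq_iff abs_le_iff)
  done

lemma exit39:
  assumes r3: "3 \<le> r" and bd: "bnd V B" "\<bar>x\<bar> \<le> V" "\<bar>y\<bar> \<le> V" "int r + 2 \<le> V"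
  shows "run prog V (39, B(r + 2 := 0, 0 := int (r + 2), 1 := x, 2 := y)) 2
           (64, B(r + 2 := 0, 0 := int (r + 2), 1 := 0, 2 := y))"
  apply (insert r3 bd)
  apply (rule run_stepI, simp, simp add: step_exec length_prog prog_nth nat_add_distrib nat_mult_distrib nat_diff_distrib)+
  apply (rule run_0I)
  apply (auto intro!: bnd_upd simp: fun_eq_iff abs_le_iff)
  done

lemma exit82:
  assumes r3: "3 \<le> r" and bd: "bnd V B" "\<bar>x\<bar> \<le> V" "\<bar>y\<bar> \<le> V" "int r + 2 \<le> V"
  shows "run prog V (82, B(r + 2 := 0, 0 := int (r + 2), 1 := x, 2 := y)) 2
           (107, B(r + 2 := 0, 0 := int (r + 2), 1 := 0, 2 := y))"
  apply (insert r3 bd)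
  apply (rule run_stepI, simp, simp add: step_exec length_prog prog_nth nat_add_distrib nat_mult_distrib nat_diff_distrib)+
  apply (rule run_0I)
  apply (auto intro!: bnd_upd simp: fun_eq_iff abs_le_iff)
  done

lemma mid64:
  assumes r3: "3 \<le> r" and Bp: "B (Suc r) = b0"
    and bd: "bnd V B" "\<bar>y\<bar> \<le> V" "int r + 6 \<le> V" "\<bar>b0\<bar> \<le> V - 2"
  shows "run prog V (64, B(r + 2 := 0, 0 := int (r + 2), 1 := 0, 2 := y)) 18
           (82, B(r + 2 := 0, r + 3 := b0 + 1, r + 4 := b0 + 1, r + 5 := b0 + 2, r + 6 := b0,
                  0 := int (r + 6), 1 := 1, 2 := b0))"
  apply (insert r3 Bp bd)
  apply (rule run_stepI, simp, simp add: step_exec length_prog prog_nth nat_add_distrib nat_mult_distrib nat_diff_distrib)+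
  apply (rule run_0I)
  apply (auto intro!: bnd_upd simp: fun_eq_iff abs_le_iff)
  done

lemma end107:
  assumes r3: "3 \<le> r" and k1: "1 \<le> k" and Bp: "B r = int (Suc k)" "B (Suc r) = b0"
     "B (3 * k + r) = tt" "B (Suc (4 * k + r)) = uu"
    and bd: "bnd V B" "\<bar>y\<bar> \<le> V" "int r + 4 * int k + 10 \<le> V" "\<bar>b0\<bar> \<le> V - 1"
      "\<bar>tt\<bar> \<le> V - 4" "\<bar>uu\<bar> \<le> V - 1"
  shows "run prog V (107, B(r + 2 := 0, 0 := int (r + 2), 1 := 0, 2 := y)) 34
           (141, B(r + 2 := b0 + 1, r + 3 := tt + 4, 0 := b0 + 1, 1 := uu + 1, 2 := tt + 4))"
  apply (insert r3 k1 Bp bd)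
  apply (rule run_stepI, simp, simp add: step_exec length_prog prog_nth nat_add_distrib nat_mult_distrib nat_diff_distrib)+
  apply (rule run_0I)
  apply (auto intro!: bnd_upd simp: fun_eq_iff abs_le_iff)
  done



definition em :: "(nat \<times> nat) list \<Rightarrow> nat \<Rightarrow> int" where
  "em xs a = (if 3 \<le> a \<and> a < 3 + 2 * length xs then
     (if even (a - 3) then int (fst (xs ! ((a - 3) div 2))) else int (snd (xs ! ((a - 3) div 2))))
     else 0)"

lemma encode_em: "encode n es t = (em es)(0 := int n, 1 := int (length es), 2 := t)"
  by (rule ext) (simp add: encode_def em_def)

lemma em_at: "i < length xs \<Longrightarrow> em xs (3 + 2 * i) = int (fst (xs ! i))"
  "i < length xs \<Longrightarrow> em xs (4 + 2 * i) = int (snd (xs ! i))"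
  by (simp_all add: em_def)

lemma em_beyond: "3 + 2 * length xs \<le> a \<Longrightarrow> em xs a = 0"
  by (simp add: em_def)

lemma em_snoc: "em (xs @ [e]) = (em xs)(3 + 2 * length xs := int (fst e), 4 + 2 * length xs := int (snd e))"
proof (rule ext)
  fix a
  show "em (xs @ [e]) a = ((em xs)(3 + 2 * length xs := int (fst e), 4 + 2 * length xs := int (snd e))) a"
  proof (cases "3 \<le> a \<and> a < 3 + 2 * length xs")
    case True
    then have "(a - 3) div 2 < length xs" by auto
    then show ?thesis using True by (auto simp: em_def nth_append)
  next
    case False
    then show ?thesis by (auto simp: em_def nth_append)
  qed
qed

lemma em_bound: "(\<forall>e\<in>set xs. fst e \<le> K \<and> snd e \<le> K) \<Longrightarrow> \<bar>em xs a\<bar> \<le> int K"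
  by (auto simp: em_def)

definition newe :: "nat \<Rightarrow> nat \<Rightarrow> nat \<times> nat" where
  "newe n j = (if j < 2 * n then (j, n + j) else if j = 2 * n then (0, 3 * n) else (3 * n, n + j))"

lemma boot:
  assumes np: "0 < n" and bd: "bnd V B" "\<bar>t\<bar> \<le> V" "int (22 * n + 2 * m) + 30 \<le> V"
  shows "run prog V (0, B(0 := int n, 1 := int m, 2 := t)) 39
     (39, B(19 * n + 2 * m := t, 22 * n + 2 * m := int (5 * n + m), 3 + 2 * m := 0, 4 + 2 * m := int n,
            5 + 2 * m := 2 * int n - 1, 0 := int (5 + 2 * m), 1 := 1, 2 := 2 * int n - 1))"
  apply (insert np bd)
  apply (rule run_stepI, simp, simp add: step_exec length_prog prog_nth nat_add_distrib nat_mult_distrib nat_diff_distrib)+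
  apply (rule run_0I)
  apply (auto intro!: bnd_upd simp: fun_eq_iff abs_le_iff)
  done




locale R =
  fixes n :: nat and es :: "(nat \<times> nat) list" and t :: int
  assumes npos: "0 < n" and esr: "\<forall>e\<in>set es. fst e < n \<and> snd e < n"
begin

abbreviation "m \<equiv> length es"
definition "VV = 30 * int (n + m) + \<bar>t\<bar> + 30"
definition "xs j = es @ map (newe n) [0..<j]"
definition "Bj j = (em (xs j))(19 * n + 2 * m := t, 22 * n + 2 * m := int (5 * n + m))"
definition "rr j = 2 * m + 2 * j + 1"
definition "St L j c x y = (L, (Bj j)(rr j + 2 := int c, 0 := int (rr j + 2), 1 := x, 2 := y))"

lemma len_xs[simp]: "length (xs j) = m + j" by (simp add: xs_def)
lemma xs_Suc: "xs (Suc j) = xs j @ [newe n j]" by (simp add: xs_def)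

lemma xs_last: "1 \<le> j \<Longrightarrow> xs j ! (m + j - 1) = newe n (j - 1)"
  by (cases j) (auto simp: xs_def nth_append)

lemma Bj_r: assumes "1 \<le> j" "j \<le> 5 * n + 1"
  shows "Bj j (rr j) = int (fst (newe n (j - 1)))" "Bj j (Suc (rr j)) = int (snd (newe n (j - 1)))"
proof -
  have i: "m + j - 1 < length (xs j)" using assms by simp
  have e1: "rr j = 3 + 2 * (m + j - 1)" "Suc (rr j) = 4 + 2 * (m + j - 1)"
    using assms by (auto simp: rr_def)
  have ne: "rr j \<noteq> 19 * n + 2 * m" "rr j \<noteq> 22 * n + 2 * m"
     "Suc (rr j) \<noteq> 19 * n + 2 * m" "Suc (rr j) \<noteq> 22 * n + 2 * m"
    using assms npos by (auto simp: rr_def)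
  show "Bj j (rr j) = int (fst (newe n (j - 1)))"
    using ne em_at(1)[OF i] xs_last[OF assms(1)] e1 by (simp add: Bj_def)
  show "Bj j (Suc (rr j)) = int (snd (newe n (j - 1)))"
    using ne em_at(2)[OF i] xs_last[OF assms(1)] e1 by (simp add: Bj_def)
qed

lemma Bj_Suc: assumes "j \<le> 5 * n"
  shows "Bj (Suc j) = (Bj j)(rr j + 2 := int (fst (newe n j)), rr j + 3 := int (snd (newe n j)))"
proof -
  have ne: "rr j + 2 \<noteq> 19 * n + 2 * m" "rr j + 2 \<noteq> 22 * n + 2 * m"
     "rr j + 3 \<noteq> 19 * n + 2 * m" "rr j + 3 \<noteq> 22 * n + 2 * m"
    using assms npos by (auto simp: rr_def)
  have e: "3 + 2 * length (xs j) = rr j + 2" "4 + 2 * length (xs j) = rr j + 3"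
    by (auto simp: rr_def)
  show ?thesis
    unfolding Bj_def xs_Suc em_snoc e
    using ne by (auto simp: fun_eq_iff)
qed

lemma newe_bound: "j \<le> 5 * n \<Longrightarrow> fst (newe n j) \<le> 6 * n \<and> snd (newe n j) \<le> 6 * n"
  by (auto simp: newe_def)

lemma bnd_Bj: assumes "j \<le> 5 * n + 1" shows "bnd VV (Bj j)"
proof -
  have "\<forall>e\<in>set (xs j). fst e \<le> 6 * n \<and> snd e \<le> 6 * n"
  proof
    fix e assume "e \<in> set (xs j)"
    then have "e \<in> set es \<or> (\<exists>i<j. e = newe n i)" by (auto simp: xs_def)
    then show "fst e \<le> 6 * n \<and> snd e \<le> 6 * n"
    proof
      assume "e \<in> set es" then show ?thesis using esr by fastforce
    next
      assume "\<exists>i<j. e = newe n i"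
      then obtain i where "i < j" "e = newe n i" by blast
      then show ?thesis using newe_bound[of i] assms by auto
    qed
  qed
  then have "\<bar>em (xs j) a\<bar> \<le> int (6 * n)" for a by (rule em_bound)
  moreover have "int (6 * n) \<le> VV" by (simp add: VV_def)
  ultimately have h: "\<bar>em (xs j) a\<bar> \<le> VV" for a unfolding VV_def by (meson order_trans)
  show ?thesis
    unfolding bnd_def Bj_def
  proof
    fix a show "\<bar>((em (xs j))(19 * n + 2 * m := t, 22 * n + 2 * m := int (5 * n + m))) a\<bar> \<le> VV"
      using h[of a] by (auto simp: VV_def)
  qed
qed

lemma VV_ge: "int (rr j) + 10 + 4 * int n \<le> VV" if "j \<le> 5 * n + 1"
  using that by (simp add: VV_def rr_def)

lemma VV_ge2: "int (6 * n) + 10 \<le> VV" "\<bar>t\<bar> + 4 \<le> VV" "int (5 * n + m) + 1 \<le> VV"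
  by (simp_all add: VV_def)

lemma VV_nonneg: "0 \<le> VV" by (simp add: VV_def)

lemma newe_lo: "1 \<le> j \<Longrightarrow> j < 2 * n \<Longrightarrow> newe n (j - 1) = (j - 1, n + j - 1) \<and> newe n j = (j, n + j)"
  by (simp add: newe_def)

lemma newe_hi: assumes "2 * n + 2 \<le> j" shows "newe n (j - 1) = (3 * n, n + j - 1) \<and> newe n j = (3 * n, n + j)"
proof -
  have "\<not> j - 1 < 2 * n" "j - 1 \<noteq> 2 * n" "\<not> j < 2 * n" "j \<noteq> 2 * n" using assms by auto
  then show ?thesis using assms by (simp add: newe_def)
qed

lemma loop1: "\<forall>j x y. j + c = 2 * n \<longrightarrow> 1 \<le> j \<longrightarrow> \<bar>x\<bar> \<le> VV \<longrightarrow> \<bar>y\<bar> \<le> VV \<longrightarrow>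
   (\<exists>y'. \<bar>y'\<bar> \<le> VV \<and> run prog VV (St 39 j c x y) (25 * c + 2) (St 64 (2 * n) 0 0 y'))"
proof (induction c)
  case 0
  show ?case
  proof (intro allI impI)
    fix j x y assume j: "j + 0 = 2 * n" "1 \<le> j" and xy: "\<bar>x\<bar> \<le> VV" "\<bar>y\<bar> \<le> VV"
    have r3: "3 \<le> rr j" using j by (simp add: rr_def)
    have r: "run prog VV (39, (Bj j)(rr j + 2 := 0, 0 := int (rr j + 2), 1 := x, 2 := y)) 2
           (64, (Bj j)(rr j + 2 := 0, 0 := int (rr j + 2), 1 := 0, 2 := y))"
      apply (rule exit39[OF r3 bnd_Bj xy])
      using j VV_ge[of j] by auto
    have j2: "j = 2 * n" using j by simp
    show "\<exists>y'. \<bar>y'\<bar> \<le> VV \<and> run prog VV (St 39 j 0 x y) (25 * 0 + 2) (St 64 (2 * n) 0 0 y')"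
    proof (intro exI conjI)
      show "\<bar>y\<bar> \<le> VV" by (fact xy(2))
      have e: "25 * 0 + 2 = (2::nat)" "int 0 = 0" by simp_all
      show "run prog VV (St 39 j 0 x y) (25 * 0 + 2) (St 64 (2 * n) 0 0 y)"
        unfolding St_def e j2[symmetric] by (rule r)
    qed
  qed
next
  case (Suc c)
  show ?case
  proof (intro allI impI)
    fix j x y assume j: "j + Suc c = 2 * n" "1 \<le> j" and xy: "\<bar>x\<bar> \<le> VV" "\<bar>y\<bar> \<le> VV"
    have jl: "j < 2 * n" "j \<le> 5 * n" "j \<le> 5 * n + 1" using j by auto
    have r3: "3 \<le> rr j" using j by (simp add: rr_def)
    define a0 where "a0 = int (fst (newe n (j - 1)))"
    define b0 where "b0 = int (snd (newe n (j - 1)))"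
    have ne: "newe n (j - 1) = (j - 1, n + j - 1)" "newe n j = (j, n + j)" using newe_lo[OF j(2) jl(1)] by auto
    have ab: "a0 = int j - 1" "b0 = int n + int j - 1" using ne j by (auto simp: a0_def b0_def)
    have bds: "int (rr j) + 5 \<le> VV" "int (Suc c) \<le> VV" "\<bar>a0\<bar> \<le> VV - 1" "\<bar>b0\<bar> \<le> VV - 1"
      using VV_ge[OF jl(3)] j ab by auto
    have it: "run prog VV (39, (Bj j)(rr j + 2 := int (Suc c), 0 := int (rr j + 2), 1 := x, 2 := y)) 25
           (39, (Bj j)(rr j + 2 := a0 + 1, rr j + 3 := b0 + 1, rr j + 4 := int (Suc c) - 1, 0 := int (rr j + 4), 1 := b0 + 1, 2 := 0))"
      by (rule iter39[OF r3 _ Bj_r(1)[OF j(2) jl(3), folded a0_def] Bj_r(2)[OF j(2) jl(3), folded b0_def] bnd_Bj[OF jl(3)] xy bds]) simp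
    have eq: "(39, (Bj j)(rr j + 2 := a0 + 1, rr j + 3 := b0 + 1, rr j + 4 := int (Suc c) - 1, 0 := int (rr j + 4), 1 := b0 + 1, 2 := 0))
       = St 39 (Suc j) c (b0 + 1) 0"
      unfolding St_def Bj_Suc[OF jl(2)] using ne ab
      by (auto simp: rr_def fun_eq_iff)
    have b0b: "\<bar>b0 + 1\<bar> \<le> VV" using bds by auto
    from Suc.IH[rule_format, of "Suc j" "b0 + 1" 0] j b0b VV_nonneg obtain y' where
      y': "\<bar>y'\<bar> \<le> VV" "run prog VV (St 39 (Suc j) c (b0 + 1) 0) (25 * c + 2) (St 64 (2 * n) 0 0 y')"
      by auto
    have "run prog VV (St 39 j (Suc c) x y) (25 + (25 * c + 2)) (St 64 (2 * n) 0 0 y')"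
      by (rule run_trans[OF _ y'(2)]) (use it eq in \<open>simp add: St_def\<close>)
    then show "\<exists>y'. \<bar>y'\<bar> \<le> VV \<and> run prog VV (St 39 j (Suc c) x y) (25 * Suc c + 2) (St 64 (2 * n) 0 0 y')"
      using y'(1) by (auto simp: algebra_simps)
  qed
qed

lemma loop2: "\<forall>j x y. j + c = 5 * n + 1 \<longrightarrow> 2 * n + 2 \<le> j \<longrightarrow> \<bar>x\<bar> \<le> VV \<longrightarrow> \<bar>y\<bar> \<le> VV \<longrightarrow>
   (\<exists>y'. \<bar>y'\<bar> \<le> VV \<and> run prog VV (St 82 j c x y) (25 * c + 2) (St 107 (5 * n + 1) 0 0 y'))"
proof (induction c)
  case 0
  show ?case
  proof (intro allI impI)
    fix j x y assume j: "j + 0 = 5 * n + 1" "2 * n + 2 \<le> j" and xy: "\<bar>x\<bar> \<le> VV" "\<bar>y\<bar> \<le> VV"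
    have r3: "3 \<le> rr j" using j by (simp add: rr_def)
    have r: "run prog VV (82, (Bj j)(rr j + 2 := 0, 0 := int (rr j + 2), 1 := x, 2 := y)) 2
           (107, (Bj j)(rr j + 2 := 0, 0 := int (rr j + 2), 1 := 0, 2 := y))"
      apply (rule exit82[OF r3 bnd_Bj xy])
      using j VV_ge[of j] by auto
    have j2: "j = 5 * n + 1" using j by simp
    show "\<exists>y'. \<bar>y'\<bar> \<le> VV \<and> run prog VV (St 82 j 0 x y) (25 * 0 + 2) (St 107 (5 * n + 1) 0 0 y')"
    proof (intro exI conjI)
      show "\<bar>y\<bar> \<le> VV" by (fact xy(2))
      have e: "25 * 0 + 2 = (2::nat)" "int 0 = 0" by simp_all
      show "run prog VV (St 82 j 0 x y) (25 * 0 + 2) (St 107 (5 * n + 1) 0 0 y)"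
        unfolding St_def e j2[symmetric] by (rule r)
    qed
  qed
next
  case (Suc c)
  show ?case
  proof (intro allI impI)
    fix j x y assume j: "j + Suc c = 5 * n + 1" "2 * n + 2 \<le> j" and xy: "\<bar>x\<bar> \<le> VV" "\<bar>y\<bar> \<le> VV"
    have jl: "1 \<le> j" "j \<le> 5 * n" "j \<le> 5 * n + 1" using j by auto
    have r3: "3 \<le> rr j" using j by (simp add: rr_def)
    define a0 where "a0 = int (fst (newe n (j - 1)))"
    define b0 where "b0 = int (snd (newe n (j - 1)))"
    have ne: "newe n (j - 1) = (3 * n, n + j - 1)" "newe n j = (3 * n, n + j)" using newe_hi[OF j(2)] by auto
    have ab: "a0 = 3 * int n" "b0 = int n + int j - 1" using ne j by (auto simp: a0_def b0_def)
    have bds: "int (rr j) + 5 \<le> VV" "int (Suc c) \<le> VV" "\<bar>a0\<bar> \<le> VV - 1" "\<bar>b0\<bar> \<le> VV - 1"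
      using VV_ge[OF jl(3)] j ab by (auto simp: VV_def)
    have it: "run prog VV (82, (Bj j)(rr j + 2 := int (Suc c), 0 := int (rr j + 2), 1 := x, 2 := y)) 25
           (82, (Bj j)(rr j + 2 := a0, rr j + 3 := b0 + 1, rr j + 4 := int (Suc c) - 1, 0 := int (rr j + 4), 1 := b0 + 1, 2 := 0))"
      by (rule iter82[OF r3 _ Bj_r(1)[OF jl(1) jl(3), folded a0_def] Bj_r(2)[OF jl(1) jl(3), folded b0_def] bnd_Bj[OF jl(3)] xy bds]) simp
    have eq: "(82, (Bj j)(rr j + 2 := a0, rr j + 3 := b0 + 1, rr j + 4 := int (Suc c) - 1, 0 := int (rr j + 4), 1 := b0 + 1, 2 := 0))
       = St 82 (Suc j) c (b0 + 1) 0"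
      unfolding St_def Bj_Suc[OF jl(2)] using ne ab jl
      by (auto simp: rr_def fun_eq_iff)
    have b0b: "\<bar>b0 + 1\<bar> \<le> VV" using bds by auto
    from Suc.IH[rule_format, of "Suc j" "b0 + 1" 0] j b0b VV_nonneg obtain y' where
      y': "\<bar>y'\<bar> \<le> VV" "run prog VV (St 82 (Suc j) c (b0 + 1) 0) (25 * c + 2) (St 107 (5 * n + 1) 0 0 y')"
      by auto
    have "run prog VV (St 82 j (Suc c) x y) (25 + (25 * c + 2)) (St 107 (5 * n + 1) 0 0 y')"
      by (rule run_trans[OF _ y'(2)]) (use it eq in \<open>simp add: St_def\<close>)
    then show "\<exists>y'. \<bar>y'\<bar> \<le> VV \<and> run prog VV (St 82 j (Suc c) x y) (25 * Suc c + 2) (St 107 (5 * n + 1) 0 0 y')"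
      using y'(1) by (auto simp: algebra_simps)
  qed
qed

lemma mid: assumes y: "\<bar>y\<bar> \<le> VV"
  shows "run prog VV (St 64 (2 * n) 0 0 y) 18 (St 82 (2 * n + 2) (3 * n - 1) 1 (int (3 * n - 1)))"
proof -
  let ?r = "rr (2 * n)"
  have r3: "3 \<le> ?r" using npos by (simp add: rr_def)
  have j1: "1 \<le> 2 * n" "2 * n \<le> 5 * n + 1" using npos by auto
  have ne: "newe n (2 * n - 1) = (2 * n - 1, 3 * n - 1)" "newe n (2 * n) = (0, 3 * n)" "newe n (Suc (2 * n)) = (3 * n, 3 * n + 1)"
    using npos by (auto simp: newe_def)
  have b: "Bj (2 * n) (Suc ?r) = int (3 * n - 1)" using Bj_r(2)[OF j1] ne by simp
  have bd: "int ?r + 6 \<le> VV" "\<bar>int (3 * n - 1)\<bar> \<le> VV - 2" using VV_ge[OF j1(2)] npos by (auto simp: VV_def)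
  have m: "run prog VV (64, (Bj (2 * n))(?r + 2 := 0, 0 := int (?r + 2), 1 := 0, 2 := y)) 18
           (82, (Bj (2 * n))(?r + 2 := 0, ?r + 3 := int (3 * n - 1) + 1, ?r + 4 := int (3 * n - 1) + 1, ?r + 5 := int (3 * n - 1) + 2, ?r + 6 := int (3 * n - 1),
                  0 := int (?r + 6), 1 := 1, 2 := int (3 * n - 1)))"
    by (rule mid64[OF r3 b bnd_Bj[OF j1(2)] y bd])
  have e2: "Bj (2 * n + 2) = (Bj (2 * n))(?r + 2 := 0, ?r + 3 := int (3 * n), ?r + 4 := int (3 * n), ?r + 5 := int (3 * n + 1))"
  proof -
    have "Bj (Suc (Suc (2 * n))) = ((Bj (2 * n))(?r + 2 := 0, ?r + 3 := int (3 * n)))(rr (Suc (2 * n)) + 2 := int (3 * n), rr (Suc (2 * n)) + 3 := int (3 * n + 1))"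
      using Bj_Suc[of "Suc (2 * n)"] Bj_Suc[of "2 * n"] ne npos by simp
    moreover have "rr (Suc (2 * n)) = ?r + 2" by (simp add: rr_def)
    ultimately show ?thesis by (auto simp: fun_eq_iff)
  qed
  have eq: "(82, (Bj (2 * n))(?r + 2 := 0, ?r + 3 := int (3 * n - 1) + 1, ?r + 4 := int (3 * n - 1) + 1, ?r + 5 := int (3 * n - 1) + 2, ?r + 6 := int (3 * n - 1),
                  0 := int (?r + 6), 1 := 1, 2 := int (3 * n - 1))) = St 82 (2 * n + 2) (3 * n - 1) 1 (int (3 * n - 1))"
    unfolding St_def e2 using npos by (auto simp: rr_def fun_eq_iff of_nat_diff)
  show ?thesis using m eq by (simp add: St_def)
qed

lemma bnd_em_es: "bnd VV (em es)"
proof -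
  have "\<forall>e\<in>set es. fst e \<le> n \<and> snd e \<le> n" using esr by (auto simp: less_imp_le)
  then have "\<bar>em es a\<bar> \<le> int n" for a by (rule em_bound)
  moreover have "int n \<le> VV" by (simp add: VV_def)
  ultimately show ?thesis unfolding bnd_def by (meson order_trans)
qed

lemma boot_loc: "run prog VV (0, encode n es t) 39 (St 39 1 (2 * n - 1) 1 (2 * int n - 1))"
proof -
  have bd: "\<bar>t\<bar> \<le> VV" "int (22 * n + 2 * m) + 30 \<le> VV" by (auto simp: VV_def)
  have b: "run prog VV (0, (em es)(0 := int n, 1 := int m, 2 := t)) 39
     (39, (em es)(19 * n + 2 * m := t, 22 * n + 2 * m := int (5 * n + m), 3 + 2 * m := 0, 4 + 2 * m := int n,
            5 + 2 * m := 2 * int n - 1, 0 := int (5 + 2 * m), 1 := 1, 2 := 2 * int n - 1))"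
    by (rule boot[OF npos bnd_em_es bd])
  have ne: "newe n 0 = (0, n)" using npos by (simp add: newe_def)
  have B0: "Bj 0 = (em es)(19 * n + 2 * m := t, 22 * n + 2 * m := int (5 * n + m))" by (simp add: Bj_def xs_def)
  have B1: "Bj 1 = ((em es)(19 * n + 2 * m := t, 22 * n + 2 * m := int (5 * n + m)))(rr 0 + 2 := int 0, rr 0 + 3 := int n)"
    using Bj_Suc[of 0] ne B0 by (simp add: One_nat_def)
  have eq: "(39::nat, (em es)(19 * n + 2 * m := t, 22 * n + 2 * m := int (5 * n + m), 3 + 2 * m := 0, 4 + 2 * m := int n,
            5 + 2 * m := 2 * int n - 1, 0 := int (5 + 2 * m), 1 := 1, 2 := 2 * int n - 1)) = St 39 1 (2 * n - 1) 1 (2 * int n - 1)"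
    unfolding St_def B1 using npos by (auto simp: rr_def fun_eq_iff of_nat_diff)
  show ?thesis using b eq by (simp add: encode_em)
qed

definition "Mf = (Bj (5 * n + 1))(rr (5 * n + 1) + 2 := int (6 * n) + 1, rr (5 * n + 1) + 3 := t + 4,
   0 := int (6 * n) + 1, 1 := int (5 * n + m) + 1, 2 := t + 4)"

lemma end_loc: assumes y: "\<bar>y\<bar> \<le> VV"
  shows "run prog VV (St 107 (5 * n + 1) 0 0 y) 34 (141, Mf)"
proof -
  let ?r = "rr (5 * n + 1)"
  let ?k = "3 * n - 1"
  have r3: "3 \<le> ?r" by (simp add: rr_def)
  have k1: "1 \<le> ?k" using npos by simp
  have j1: "1 \<le> 5 * n + 1" "5 * n + 1 \<le> 5 * n + 1" by auto
  have ne: "newe n (5 * n) = (3 * n, 6 * n)" using npos by (auto simp: newe_def)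
  have b1: "Bj (5 * n + 1) ?r = int (Suc ?k)" using Bj_r(1)[OF j1] ne npos by simp
  have b2: "Bj (5 * n + 1) (Suc ?r) = int (6 * n)" using Bj_r(2)[OF j1] ne by simp
  have a1: "3 * ?k + ?r = 19 * n + 2 * m" using npos by (simp add: rr_def)
  have a2: "Suc (4 * ?k + ?r) = 22 * n + 2 * m" using npos by (simp add: rr_def)
  have ane: "19 * n + 2 * m \<noteq> 22 * n + 2 * m" using npos by simp
  have b3: "Bj (5 * n + 1) (3 * ?k + ?r) = t" unfolding a1 using ane by (simp add: Bj_def)
  have b4: "Bj (5 * n + 1) (Suc (4 * ?k + ?r)) = int (5 * n + m)" unfolding a2 by (simp add: Bj_def)
  have bd: "int ?r + 4 * int ?k + 10 \<le> VV" "\<bar>int (6 * n)\<bar> \<le> VV - 1" "\<bar>t\<bar> \<le> VV - 4" "\<bar>int (5 * n + m)\<bar> \<le> VV - 1"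
    using npos by (auto simp: VV_def rr_def of_nat_diff)
  have e: "run prog VV (107, (Bj (5 * n + 1))(?r + 2 := 0, 0 := int (?r + 2), 1 := 0, 2 := y)) 34
           (141, (Bj (5 * n + 1))(?r + 2 := int (6 * n) + 1, ?r + 3 := t + 4, 0 := int (6 * n) + 1, 1 := int (5 * n + m) + 1, 2 := t + 4))"
    by (rule end107[OF r3 k1 b1 b2 b3 b4 bnd_Bj[OF j1(2)] y bd])
  then show ?thesis by (simp add: St_def Mf_def)
qed

lemma decode_Mf: "decode Mf = (6 * n + 1, xs (5 * n + 1), t + 4)"
proof -
  let ?x = "xs (5 * n + 1)"
  have a: "Mf (3 + 2 * i) = int (fst (?x ! i)) \<and> Mf (4 + 2 * i) = int (snd (?x ! i))" if i: "i < 5 * n + m + 1" for i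
  proof -
    have ne: "3 + 2 * i \<noteq> 19 * n + 2 * m" "3 + 2 * i \<noteq> 22 * n + 2 * m"
      "4 + 2 * i \<noteq> 19 * n + 2 * m" "4 + 2 * i \<noteq> 22 * n + 2 * m"
      "3 + 2 * i \<noteq> rr (5 * n + 1) + 2" "3 + 2 * i \<noteq> rr (5 * n + 1) + 3"
      "4 + 2 * i \<noteq> rr (5 * n + 1) + 2" "4 + 2 * i \<noteq> rr (5 * n + 1) + 3"
      using i npos by (auto simp: rr_def)
    have il: "i < length ?x" using i by simp
    show ?thesis using ne em_at[OF il] by (simp add: Mf_def Bj_def)
  qed
  have m1: "nat (Mf 1) = length ?x" by (simp add: Mf_def)
  have "map (\<lambda>i. (nat (Mf (3 + 2 * i)), nat (Mf (4 + 2 * i)))) [0..<nat (Mf 1)] = map (\<lambda>i. ?x ! i) [0..<length ?x]"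
    unfolding m1 by (rule map_cong) (auto simp: a)
  also have "\<dots> = ?x" by (rule map_nth)
  finally show ?thesis unfolding decode_def by (simp add: Mf_def)
qed

lemma prog_run: "run prog VV (0, encode n es t) (125 * n + 45) (141, Mf)"
proof -
  have y0: "\<bar>2 * int n - 1\<bar> \<le> VV" "\<bar>1\<bar> \<le> VV" by (auto simp: VV_def)
  obtain y1 where y1: "\<bar>y1\<bar> \<le> VV" "run prog VV (St 39 1 (2 * n - 1) 1 (2 * int n - 1)) (25 * (2 * n - 1) + 2) (St 64 (2 * n) 0 0 y1)"
    using loop1[where c="2 * n - 1", rule_format, of 1 1 "2 * int n - 1"] npos y0 by auto
  have y0': "\<bar>int (3 * n - 1)\<bar> \<le> VV" "\<bar>1\<bar> \<le> VV" by (auto simp: VV_def)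
  obtain y2 where y2: "\<bar>y2\<bar> \<le> VV" "run prog VV (St 82 (2 * n + 2) (3 * n - 1) 1 (int (3 * n - 1))) (25 * (3 * n - 1) + 2) (St 107 (5 * n + 1) 0 0 y2)"
    using loop2[where c="3 * n - 1", rule_format, of "2 * n + 2" 1 "int (3 * n - 1)"] npos y0' by auto
  have r: "run prog VV (0, encode n es t) (39 + (25 * (2 * n - 1) + 2) + 18 + (25 * (3 * n - 1) + 2) + 34) (141, Mf)"
    by (rule run_trans[OF run_trans[OF run_trans[OF run_trans[OF boot_loc y1(2)] mid[OF y1(1)]] y2(2)] end_loc[OF y2(1)]])
  have k: "39 + (25 * (2 * n - 1) + 2) + 18 + (25 * (3 * n - 1) + 2) + 34 = 125 * n + 45" using npos by (cases n) auto
  show ?thesis using r unfolding k .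
qed

end



lemma adj_sym: "adj es u v = adj es v u" by (auto simp: adj_def)

lemma adj_app: "adj (xs @ ys) u v \<longleftrightarrow> adj xs u v \<or> adj ys u v" by (auto simp: adj_def)

lemma relpowp_sym: assumes "\<And>u v. Q u v \<Longrightarrow> Q v u" shows "(Q ^^ k) x y \<Longrightarrow> (Q ^^ k) y x"
proof (induction k arbitrary: x)
  case 0 then show ?case by simp
next
  case (Suc k)
  then obtain z where z: "Q x z" "(Q ^^ k) z y" using relpowp_Suc_D2 by metis
  from Suc.IH[OF z(2)] have "(Q ^^ k) y z" .
  then show ?case using assms[OF z(1)] by (rule relpowp_Suc_I)
qed

lemma relpowp_trans': "(Q ^^ a) x y \<Longrightarrow> (Q ^^ b) y z \<Longrightarrow> (Q ^^ (a + b)) x z"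
  by (metis relpowp_add relcomppI)

lemma dist_le: "(adj es ^^ k) u v \<Longrightarrow> dist es u v \<le> k"
  unfolding dist_def by (rule Least_le)

lemma dist_walk: "(adj es ^^ k) u v \<Longrightarrow> (adj es ^^ dist es u v) u v"
  unfolding dist_def by (rule LeastI)

lemma dist_self: "dist es u u = 0"
  unfolding dist_def by (rule Least_eq_0) simp

definition key :: "nat \<times> nat \<Rightarrow> nat set" where "key e = {fst e, snd e}"

lemma wf_from_distinct:
  assumes r: "\<forall>(u, v) \<in> set xs. u < N \<and> v < N \<and> u \<noteq> v" and d: "distinct (map key xs)"
  shows "wf_graph N xs"
proof -
  have "xs ! i \<noteq> xs ! j \<and> xs ! i \<noteq> prod.swap (xs ! j)" if ij: "i < length xs" "j < length xs" "i \<noteq> j" for i j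
  proof -
    have "key (xs ! i) \<noteq> key (xs ! j)" using d ij by (auto simp: distinct_conv_nth)
    then show ?thesis by (cases "xs ! i"; cases "xs ! j") (auto simp: key_def insert_commute)
  qed
  then show ?thesis using r unfolding wf_graph_def by blast
qed

lemma distinct_from_wf: assumes "wf_graph N xs" shows "distinct (map key xs)"
proof -
  have "key (xs ! i) \<noteq> key (xs ! j)" if ij: "i < length xs" "j < length xs" "i \<noteq> j" for i j
  proof
    assume k: "key (xs ! i) = key (xs ! j)"
    have "xs ! i \<noteq> xs ! j \<and> xs ! i \<noteq> prod.swap (xs ! j)" using assms ij unfolding wf_graph_def by blast
    then show False using k by (cases "xs ! i"; cases "xs ! j") (auto simp: key_def doubleton_eq_iff)
  qed
  then show ?thesis by (auto simp: distinct_conv_nth)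
qed


lemma bitlen_mono: "a \<le> b \<Longrightarrow> bitlen a \<le> bitlen b"
proof (induction b arbitrary: a rule: less_induct)
  case (less b)
  show ?case
  proof (cases "a = 0")
    case True then show ?thesis by simp
  next
    case False
    then have "b \<noteq> 0" "b div 2 < b" "a div 2 \<le> b div 2" using less.prems by (auto intro: div_le_mono)
    then show ?thesis using less.IH[of "b div 2" "a div 2"] False by simp
  qed
qed

lemma bitlen_Suc: "bitlen (Suc a) \<le> Suc (bitlen a)"
proof (induction a rule: less_induct)
  case (less a)
  show ?case
  proof (cases "a = 0")
    case True then show ?thesis by simp
  next
    case False
    show ?thesis
    proof (cases "Suc a div 2 = a div 2")
      case True then show ?thesis using False by simp
    next
      case F2: False
      then have e: "Suc a div 2 = Suc (a div 2)" by presburger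
      have "a div 2 < a" using False by simp
      then have "bitlen (Suc (a div 2)) \<le> Suc (bitlen (a div 2))" by (rule less.IH)
      then show ?thesis using False e by simp
    qed
  qed
qed

lemma bitlen_add: "bitlen (a + k) \<le> bitlen a + k"
proof (induction k)
  case 0 then show ?case by simp
next
  case (Suc k) then show ?case using bitlen_Suc[of "a + k"] by simp
qed

lemma bitlen_gt: "a < 2 ^ bitlen a"
proof (induction a rule: less_induct)
  case (less a)
  show ?case
  proof (cases "a = 0")
    case True then show ?thesis by simp
  next
    case False
    then have "a div 2 < 2 ^ bitlen (a div 2)" using less.IH by simp
    then show ?thesis using False by simp
  qed
qed




lemma diam_set: "{dist es u v | u v. u < N \<and> v < N} = (\<lambda>(u, v). dist es u v) ` ({..<N} \<times> {..<N})"
  by auto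

lemma diam_ge: "u < N \<Longrightarrow> v < N \<Longrightarrow> dist es u v \<le> diameter N es"
  unfolding diameter_def diam_set by (rule Max_ge) auto

lemma diam_ex: "0 < N \<Longrightarrow> \<exists>u v. u < N \<and> v < N \<and> diameter N es = dist es u v"
proof -
  assume N: "0 < N"
  have "diameter N es \<in> (\<lambda>(u, v). dist es u v) ` ({..<N} \<times> {..<N})"
    unfolding diameter_def diam_set using N by (intro Max_in) auto
  then show ?thesis by auto
qed

lemma diam_le: "0 < N \<Longrightarrow> (\<And>u v. u < N \<Longrightarrow> v < N \<Longrightarrow> dist es u v \<le> K) \<Longrightarrow> diameter N es \<le> K"
  unfolding diameter_def diam_set by (subst Max_le_iff) auto

locale Gr = R +
  assumes wf: "wf_graph n es" and conn: "connected_graph n es"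
begin

definition "N2 = 6 * n + 1"
definition "E2 = xs (5 * n + 1)"
definition "pi x = (if x < n then x else if x < 2 * n then x - n else if x < 3 * n then x - 2 * n else 0)"
definition "ll x = (if x < n then 0 else if x < 2 * n then 1 else if x < 3 * n then 2 else if x = 3 * n then (1::nat) else 2)"
definition "be x = (if x < 3 * n then pi x else n)"
definition "ad (a::nat) b = (if a \<le> b then b - a else a - b)"
definition "D x y = (if be x = be y then ad (ll x) (ll y) else dist es (pi x) (pi y) + ll x + ll y)"

lemma adjE2: "adj E2 x z \<longleftrightarrow> adj es x z \<or> (\<exists>j<5 * n + 1. (x, z) = newe n j \<or> (z, x) = newe n j)"
  unfolding E2_def xs_def adj_app by (auto simp: adj_def)

lemma g_range: "adj es u v \<Longrightarrow> u < n \<and> v < n \<and> u \<noteq> v"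
  using wf unfolding wf_graph_def adj_def by fastforce

lemma reach: "u < n \<Longrightarrow> v < n \<Longrightarrow> (adj es ^^ dist es u v) u v"
proof -
  assume "u < n" "v < n"
  then have "(adj es)\<^sup>*\<^sup>* u v" using conn by (auto simp: connected_graph_def)
  then obtain k where "(adj es ^^ k) u v" using rtranclp_imp_relpowp by metis
  then show ?thesis by (rule dist_walk)
qed

lemma dist_step: "adj es a c \<Longrightarrow> b < n \<Longrightarrow> dist es a b \<le> Suc (dist es c b)"
proof -
  assume ac: "adj es a c" and b: "b < n"
  have "(adj es ^^ dist es c b) c b" using reach g_range[OF ac] b by blast
  then have "(adj es ^^ Suc (dist es c b)) a b" using ac by (rule relpowp_Suc_I2[rotated])
  then show ?thesis by (rule dist_le)
qed

lemma dist_adj: "adj es a c \<Longrightarrow> dist es a c \<le> 1"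
proof -
  assume ac: "adj es a c"
  have "(adj es ^^ Suc 0) a c" by (rule relpowp_Suc_I2[OF ac relpowp_0_I[of "adj es" c]])
  then have "dist es a c \<le> Suc 0" by (rule dist_le)
  then show ?thesis by (simp add: One_nat_def)
qed

lemma pi_lt: "pi x < n" using npos by (auto simp: pi_def)
lemma be_lt: "x < n \<Longrightarrow> be x = x \<and> pi x = x \<and> ll x = 0" by (auto simp: be_def pi_def ll_def)
lemma be_eq: "z < n \<Longrightarrow> be y = z \<Longrightarrow> pi y = z" by (auto simp: be_def split: if_splits)

lemma EP: assumes "adj E2 x z"
  shows "(x < n \<and> z < n \<and> adj es x z) \<or>
    (pi x = pi z \<and> (ll x = Suc (ll z) \<or> ll z = Suc (ll x)) \<and> (be x = be z \<or> (x = 0 \<and> z = 3 * n) \<or> (x = 3 * n \<and> z = 0)))"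
proof -
  have c: "adj es x z \<or> (\<exists>j<5 * n + 1. (x, z) = newe n j \<or> (z, x) = newe n j)" using assms adjE2 by simp
  show ?thesis
  proof (cases "adj es x z")
    case True then show ?thesis using g_range by blast
  next
    case False
    then obtain j where j: "j < 5 * n + 1" "(x, z) = newe n j \<or> (z, x) = newe n j" using c by blast
    have "pi x = pi z \<and> (ll x = Suc (ll z) \<or> ll z = Suc (ll x)) \<and> (be x = be z \<or> (x = 0 \<and> z = 3 * n) \<or> (x = 3 * n \<and> z = 0))"
      using j npos by (auto simp: newe_def pi_def ll_def be_def split: if_splits)
    then show ?thesis by blast
  qed
qed

lemma D_step: assumes e: "adj E2 x z" shows "D x y \<le> Suc (D z y)"
  using EP[OF e]
proof
  assume A: "x < n \<and> z < n \<and> adj es x z"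
  then have xz: "x \<noteq> z" using g_range[of x z] by simp
  have bx: "be x = x" "pi x = x" "ll x = 0" "be z = z" "pi z = z" "ll z = 0" using A be_lt[of x] be_lt[of z] by auto
  have s1: "dist es x (pi y) \<le> Suc (dist es z (pi y))" using dist_step[of x z "pi y"] A pi_lt[of y] by simp
  have s2: "dist es x z \<le> 1" using dist_adj[of x z] A by simp
  show ?thesis
  proof (cases "be x = be y")
    case True
    have d1: "D x y = ll y" using True bx by (simp add: D_def ad_def)
    have d2: "D z y = dist es z (pi y) + ll y" using True bx xz by (simp add: D_def)
    show ?thesis unfolding d1 d2 by simp
  next
    case F: False
    show ?thesis
    proof (cases "be z = be y")
      case True
      then have "be y = z" using bx(4) by simp
      then have py: "pi y = z" using be_eq[of z y] A by simp
      have d1: "D x y = dist es x z + ll y" using F bx py by (simp add: D_def)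
      have d2: "D z y = ll y" using True bx by (simp add: D_def ad_def)
      show ?thesis unfolding d1 d2 using s2 by simp
    next
      case False
      have d1: "D x y = dist es x (pi y) + ll y" using F bx by (simp add: D_def)
      have d2: "D z y = dist es z (pi y) + ll y" using False bx by (simp add: D_def)
      show ?thesis unfolding d1 d2 using s1 by simp
    qed
  qed
next
  assume B: "pi x = pi z \<and> (ll x = Suc (ll z) \<or> ll z = Suc (ll x)) \<and> (be x = be z \<or> (x = 0 \<and> z = 3 * n) \<or> (x = 3 * n \<and> z = 0))"
  have lxz: "ll x \<le> Suc (ll z)" "ll z \<le> Suc (ll x)" using B by auto
  show ?thesis
  proof (cases "be x = be y")
    case True
    have d1: "D x y = ad (ll x) (ll y)" using True by (simp add: D_def)
    show ?thesis
    proof (cases "be z = be y")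
      case T2: True
      have d2: "D z y = ad (ll z) (ll y)" using T2 by (simp add: D_def)
      show ?thesis unfolding d1 d2 ad_def using lxz by arith
    next
      case F2: False
      have d2: "D z y = dist es (pi z) (pi y) + ll z + ll y" using F2 by (simp add: D_def)
      show ?thesis unfolding d1 d2 ad_def using lxz by arith
    qed
  next
    case F: False
    have d1: "D x y = dist es (pi x) (pi y) + ll x + ll y" using F by (simp add: D_def)
    show ?thesis
    proof (cases "be z = be y")
      case False
      have d2: "D z y = dist es (pi z) (pi y) + ll z + ll y" using False by (simp add: D_def)
      show ?thesis unfolding d1 d2 using B lxz by simp
    next
      case True
      have d2: "D z y = ad (ll z) (ll y)" using True by (simp add: D_def)
      have sp: "(x = 0 \<and> z = 3 * n) \<or> (x = 3 * n \<and> z = 0)" using F B True by auto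
      then show ?thesis
      proof
        assume xz: "x = 0 \<and> z = 3 * n"
        then have h: "be z = n" "pi x = 0" "ll x = 0" "ll z = 1" using npos by (auto simp: be_def pi_def ll_def)
        have "pi y = 0" using True h(1) by (auto simp: be_def pi_def split: if_splits)
        then show ?thesis unfolding d1 d2 ad_def using h by (simp add: dist_self)
      next
        assume xz: "x = 3 * n \<and> z = 0"
        then have h: "be z = 0" "pi x = 0" "ll x = 1" "ll z = 0" using npos by (auto simp: be_def pi_def ll_def)
        have "pi y = 0" using True h(1) be_eq[of 0 y] npos by auto
        then show ?thesis unfolding d1 d2 ad_def using h by (simp add: dist_self)
      qed
    qed
  qed
qed

lemma walk_D: "(adj E2 ^^ k) x y \<Longrightarrow> D x y \<le> k"
proof (induction k arbitrary: x)
  case 0 then show ?case by (auto simp: D_def ad_def)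
next
  case (Suc k)
  then obtain z where z: "adj E2 x z" "(adj E2 ^^ k) z y" using relpowp_Suc_D2 by metis
  show ?case using D_step[OF z(1), of y] Suc.IH[OF z(2)] by simp
qed

lemma newe_in: "j < 5 * n + 1 \<Longrightarrow> adj E2 (fst (newe n j)) (snd (newe n j)) \<and> adj E2 (snd (newe n j)) (fst (newe n j))"
  unfolding adjE2 by (metis prod.collapse)

lemma adjE2_sym: "adj E2 u v \<Longrightarrow> adj E2 v u" by (simp add: adj_sym)

lemma es_sub: "adj es u v \<Longrightarrow> adj E2 u v" by (simp add: adjE2)

lemma step1: assumes "adj E2 x y" shows "(adj E2 ^^ 1) x y"
proof -
  have "(adj E2 ^^ Suc 0) x y" by (rule relpowp_Suc_I2[OF assms relpowp_0_I[of "adj E2" y]])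
  then show ?thesis by (simp add: One_nat_def)
qed

lemma step2: "adj E2 x y \<Longrightarrow> adj E2 y z \<Longrightarrow> (adj E2 ^^ 2) x z"
  using relpowp_Suc_I2[OF _ step1] by (simp add: numeral_2_eq_2 One_nat_def)

lemma walk_to_pi: assumes x: "x < N2" shows "(adj E2 ^^ ll x) x (pi x)"
proof -
  consider "x < n" | "n \<le> x \<and> x < 2 * n" | "2 * n \<le> x \<and> x < 3 * n" | "x = 3 * n" | "3 * n < x"
    by linarith
  then show ?thesis
  proof cases
    case 1 then show ?thesis by (simp add: ll_def pi_def)
  next
    case 2
    have "x - n < 2 * n" "n + (x - n) = x" using 2 by auto
    then have "newe n (x - n) = (x - n, x)" by (simp add: newe_def)
    then have "adj E2 x (x - n)" using newe_in[of "x - n"] 2 by auto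
    then show ?thesis using 2 step1 by (simp add: ll_def pi_def)
  next
    case 3
    have "x - n < 2 * n" "n + (x - n) = x" "x - 2 * n < 2 * n" "n + (x - 2 * n) = x - n" using 3 by auto
    then have "newe n (x - n) = (x - n, x)" "newe n (x - 2 * n) = (x - 2 * n, x - n)" by (auto simp: newe_def)
    then have "adj E2 x (x - n)" "adj E2 (x - n) (x - 2 * n)" using newe_in[of "x - n"] newe_in[of "x - 2 * n"] 3 by auto
    then show ?thesis using 3 step2 by (simp add: ll_def pi_def)
  next
    case 4
    have "newe n (2 * n) = (0, x)" using 4 by (simp add: newe_def)
    then have "adj E2 x 0" using newe_in[of "2 * n"] by auto
    then show ?thesis using 4 step1 npos by (simp add: ll_def pi_def)
  next
    case 5
    have "\<not> x - n < 2 * n" "x - n \<noteq> 2 * n" "n + (x - n) = x" using 5 by auto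
    then have "newe n (x - n) = (3 * n, x)" "newe n (2 * n) = (0, 3 * n)" by (auto simp: newe_def)
    then have "adj E2 x (3 * n)" "adj E2 (3 * n) 0" using newe_in[of "x - n"] newe_in[of "2 * n"] 5 x by (auto simp: N2_def)
    then show ?thesis using 5 step2 npos by (simp add: ll_def pi_def)
  qed
qed

lemma walk_E2: assumes x: "x < N2" and y: "y < N2"
  shows "(adj E2 ^^ (ll x + dist es (pi x) (pi y) + ll y)) x y"
proof -
  have w1: "(adj E2 ^^ ll x) x (pi x)" by (rule walk_to_pi[OF x])
  have w2: "(adj E2 ^^ dist es (pi x) (pi y)) (pi x) (pi y)"
    using relpowp_mono[of "adj es" "adj E2", OF es_sub reach[OF pi_lt pi_lt]] by blast
  have w3: "(adj E2 ^^ ll y) (pi y) y" using relpowp_sym[OF adjE2_sym walk_to_pi[OF y]] .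
  show ?thesis by (rule relpowp_trans'[OF relpowp_trans'[OF w1 w2] w3])
qed

lemma conn2: "connected_graph N2 E2"
  unfolding connected_graph_def
proof (intro conjI allI impI)
  show "0 < N2" by (simp add: N2_def)
  fix u v assume "u < N2" "v < N2"
  then show "(adj E2)\<^sup>*\<^sup>* u v" using walk_E2 relpowp_imp_rtranclp by metis
qed

lemma dist2_ub: "x < N2 \<Longrightarrow> y < N2 \<Longrightarrow> dist E2 x y \<le> ll x + dist es (pi x) (pi y) + ll y"
  using walk_E2 dist_le by blast

lemma dist2_lb: "x < N2 \<Longrightarrow> y < N2 \<Longrightarrow> D x y \<le> dist E2 x y"
  using walk_E2 dist_walk walk_D by blast

lemma ll_le: "ll x \<le> 2" by (simp add: ll_def)

lemma diam2: "diameter N2 E2 = diameter n es + 4"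
proof (rule antisym)
  show "diameter N2 E2 \<le> diameter n es + 4"
  proof (rule diam_le)
    show "0 < N2" by (simp add: N2_def)
    fix u v assume uv: "u < N2" "v < N2"
    have "dist es (pi u) (pi v) \<le> diameter n es" using diam_ge pi_lt by blast
    then show "dist E2 u v \<le> diameter n es + 4" using dist2_ub[OF uv] ll_le[of u] ll_le[of v] by linarith
  qed
next
  obtain u v where uv: "u < n" "v < n" "diameter n es = dist es u v" using diam_ex npos by blast
  show "diameter n es + 4 \<le> diameter N2 E2"
  proof (cases "u = v")
    case False
    let ?x = "2 * n + u" and ?y = "2 * n + v"
    have xy: "?x < N2" "?y < N2" using uv by (auto simp: N2_def)
    have "D ?x ?y = dist es u v + 4" using uv False by (simp add: D_def be_def pi_def ll_def)
    then have "dist es u v + 4 \<le> dist E2 ?x ?y" using dist2_lb[OF xy] by simp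
    also have "\<dots> \<le> diameter N2 E2" using diam_ge xy by blast
    finally show ?thesis using uv by simp
  next
    case True
    let ?x = "2 * n + u" and ?y = "3 * n + 1"
    have xy: "?x < N2" "?y < N2" using uv npos by (auto simp: N2_def)
    have "D ?x ?y = dist es u 0 + 4" using uv by (simp add: D_def be_def pi_def ll_def)
    then have "4 \<le> dist E2 ?x ?y" using dist2_lb[OF xy] by simp
    also have "\<dots> \<le> diameter N2 E2" using diam_ge xy by blast
    finally show ?thesis using uv True dist_self by simp
  qed
qed

lemma key_inj: assumes i: "i < 5 * n + 1" and j: "j < 5 * n + 1" and k: "key (newe n i) = key (newe n j)"
  shows "i = j"
proof -
  have k': "{fst (newe n i), snd (newe n i)} = {fst (newe n j), snd (newe n j)}" using k by (simp add: key_def)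
  consider "i < 2 * n" | "i = 2 * n" | "2 * n < i" by linarith
  then show ?thesis
  proof cases
    case 1
    then have ei: "newe n i = (i, n + i)" by (simp add: newe_def)
    consider "j < 2 * n" | "j = 2 * n" | "2 * n < j" by linarith
    then show ?thesis
    proof cases
      case 1 then show ?thesis using k' ei npos by (auto simp: newe_def doubleton_eq_iff)
    next
      case 2 then show ?thesis using k' ei npos \<open>i < 2 * n\<close> by (auto simp: newe_def doubleton_eq_iff)
    next
      case 3 then show ?thesis using k' ei npos \<open>i < 2 * n\<close> by (auto simp: newe_def doubleton_eq_iff)
    qed
  next
    case 2
    then have ei: "newe n i = (0, 3 * n)" by (simp add: newe_def)
    consider "j < 2 * n" | "j = 2 * n" | "2 * n < j" by linarith
    then show ?thesis
    proof cases
      case 1 then show ?thesis using k' ei npos by (auto simp: newe_def doubleton_eq_iff)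
    next
      case 2 then show ?thesis using \<open>i = 2 * n\<close> by simp
    next
      case 3 then show ?thesis using k' ei npos by (auto simp: newe_def doubleton_eq_iff)
    qed
  next
    case 3
    then have ei: "newe n i = (3 * n, n + i)" by (simp add: newe_def)
    consider "j < 2 * n" | "j = 2 * n" | "2 * n < j" by linarith
    then show ?thesis
    proof cases
      case 1 then show ?thesis using k' ei npos \<open>2 * n < i\<close> by (auto simp: newe_def doubleton_eq_iff)
    next
      case 2 then show ?thesis using k' ei npos \<open>2 * n < i\<close> by (auto simp: newe_def doubleton_eq_iff)
    next
      case 3 then show ?thesis using k' ei npos \<open>2 * n < i\<close> by (auto simp: newe_def doubleton_eq_iff)
    qed
  qed
qed

lemma newe_snd_ge: "n \<le> snd (newe n j)" by (simp add: newe_def)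

lemma wf2: "wf_graph N2 E2"
proof (rule wf_from_distinct)
  show "\<forall>(u, v)\<in>set E2. u < N2 \<and> v < N2 \<and> u \<noteq> v"
  proof
    fix e assume e: "e \<in> set E2"
    then have "e \<in> set es \<or> (\<exists>j<5 * n + 1. e = newe n j)" by (auto simp: E2_def xs_def)
    then show "case e of (u, v) \<Rightarrow> u < N2 \<and> v < N2 \<and> u \<noteq> v"
    proof
      assume "e \<in> set es"
      then show ?thesis using wf unfolding wf_graph_def N2_def by auto
    next
      assume "\<exists>j<5 * n + 1. e = newe n j"
      then obtain j where "j < 5 * n + 1" "e = newe n j" by blast
      then show ?thesis using npos by (auto simp: newe_def N2_def)
    qed
  qed
  have d1: "distinct (map key es)" by (rule distinct_from_wf[OF wf])
  have d2: "distinct (map key (map (newe n) [0..<5 * n + 1]))"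
    unfolding map_map
  proof (rule distinct_map[THEN iffD2], rule conjI)
    show "distinct [0..<5 * n + 1]" by simp
    show "inj_on (key \<circ> newe n) (set [0..<5 * n + 1])"
      by (rule inj_onI) (use key_inj in auto)
  qed
  have d3: "set (map key es) \<inter> set (map key (map (newe n) [0..<5 * n + 1])) = {}"
  proof -
    have "key e \<noteq> key (newe n j)" if "e \<in> set es" for e j
    proof
      assume k: "key e = key (newe n j)"
      have "snd (newe n j) \<in> key e" using k by (simp add: key_def)
      moreover have "fst e < n" "snd e < n" using esr that by auto
      ultimately show False using newe_snd_ge[of j] by (auto simp: key_def)
    qed
    then show ?thesis by auto
  qed
  show "distinct (map key E2)" unfolding E2_def xs_def map_append distinct_append using d1 d2 d3 by blast
qed

lemma cut_eq: "{e \<in> set E2. (fst e \<in> {3 * n..<6 * n + 1}) \<noteq> (snd e \<in> {3 * n..<6 * n + 1})} = {(0, 3 * n)}"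
proof (rule set_eqI, rule iffI)
  fix e assume "e \<in> {e \<in> set E2. (fst e \<in> {3 * n..<6 * n + 1}) \<noteq> (snd e \<in> {3 * n..<6 * n + 1})}"
  then have e: "e \<in> set E2" and c: "(fst e \<in> {3 * n..<6 * n + 1}) \<noteq> (snd e \<in> {3 * n..<6 * n + 1})" by auto
  from e have "e \<in> set es \<or> (\<exists>j<5 * n + 1. e = newe n j)" by (auto simp: E2_def xs_def)
  then show "e \<in> {(0, 3 * n)}"
  proof
    assume "e \<in> set es"
    then have "fst e < n" "snd e < n" using esr by auto
    then show ?thesis using c by auto
  next
    assume "\<exists>j<5 * n + 1. e = newe n j"
    then obtain j where j: "j < 5 * n + 1" "e = newe n j" by blast
    then show ?thesis using c by (auto simp: newe_def split: if_splits)
  qed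
next
  fix e :: "nat \<times> nat" assume "e \<in> {(0, 3 * n)}"
  moreover have "(0, 3 * n) \<in> set E2"
  proof -
    have "newe n (2 * n) = (0, 3 * n)" by (simp add: newe_def)
    moreover have "2 * n \<in> set [0..<5 * n + 1]" by simp
    ultimately have "(0, 3 * n) \<in> set (map (newe n) [0..<5 * n + 1])" by (metis image_eqI set_map)
    then show ?thesis unfolding E2_def xs_def by simp
  qed
  ultimately show "e \<in> {e \<in> set E2. (fst e \<in> {3 * n..<6 * n + 1}) \<noteq> (snd e \<in> {3 * n..<6 * n + 1})}"
    using npos by auto
qed

lemma bw2: "bisection_width N2 E2 \<le> 1"
proof -
  let ?S = "{3 * n..<6 * n + 1}"
  have sub: "?S \<subseteq> {..<N2}" by (auto simp: N2_def)
  have diff: "{..<N2} - ?S = {..<3 * n}" by (auto simp: N2_def)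
  have cS: "card ?S = 3 * n + 1" by simp
  have cut: "cut_size E2 ?S = 1" unfolding cut_size_def cut_eq by simp
  let ?C = "{cut_size E2 S | S. S \<subseteq> {..<N2} \<and> card S \<le> card ({..<N2} - S) + 1 \<and> card ({..<N2} - S) \<le> card S + 1}"
  have mem: "1 \<in> ?C"
    using sub cS cut unfolding diff by (intro CollectI exI[of _ ?S]) (auto simp: diff)
  have fin: "finite ?C"
    by (rule finite_subset[of _ "cut_size E2 ` Pow {..<N2}"]) auto
  show ?thesis unfolding bisection_width_def using Min_le[OF fin mem] .
qed

lemma md2: "min_degree N2 E2 \<le> 1"
proof -
  have nb: "{u. adj E2 (2 * n) u} \<subseteq> {n}"
  proof
    fix u assume "u \<in> {u. adj E2 (2 * n) u}"
    then have a: "adj es (2 * n) u \<or> (\<exists>j<5 * n + 1. (2 * n, u) = newe n j \<or> (u, 2 * n) = newe n j)"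
      using adjE2 by simp
    have "\<not> adj es (2 * n) u" using g_range[of "2 * n" u] by auto
    then obtain j where j: "j < 5 * n + 1" "(2 * n, u) = newe n j \<or> (u, 2 * n) = newe n j" using a by blast
    then show "u \<in> {n}" using npos by (auto simp: newe_def split: if_splits)
  qed
  have c: "card {u. adj E2 (2 * n) u} \<le> 1"
    using card_mono[OF _ nb] by simp
  have "2 * n \<in> {..<N2}" by (simp add: N2_def)
  then have "min_degree N2 E2 \<le> card {u. adj E2 (2 * n) u}"
    unfolding min_degree_def by (intro Min_le) auto
  then show ?thesis using c by simp
qed

end



lemma pow_bound: fixes a b :: nat
  shows "30 * a + b + 30 \<le> (2::nat) ^ (200 * (bitlen a + bitlen b + 1))"
proof -
  have ha: "a + 1 \<le> 2 ^ bitlen a" using bitlen_gt[of a] by simp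
  have hb: "b + 1 \<le> 2 ^ bitlen b" using bitlen_gt[of b] by simp
  have "30 * a + b + 30 \<le> 64 * ((a + 1) * (b + 1))" by (simp add: algebra_simps)
  also have "\<dots> \<le> 64 * (2 ^ bitlen a * 2 ^ bitlen b)" using ha hb by (intro mult_le_mono2 mult_le_mono) auto
  also have "\<dots> = (2::nat) ^ (bitlen a + bitlen b + 6)" by (simp add: power_add)
  also have "\<dots> \<le> 2 ^ (200 * (bitlen a + bitlen b + 1))" by (intro power_increasing) auto
  finally show ?thesis .
qed

theorem theorem4:
  shows "\<exists>(P :: instr list) (c :: nat). \<forall>n es (t :: int).
    wf_graph n es \<and> connected_graph n es \<longrightarrow>
    (\<exists>k \<le> c * (n + length es + 1).
       halted P (steps P k (init_state n es t)) \<and>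
       (\<forall>j \<le> k. \<forall>a. \<bar>snd (steps P j (init_state n es t)) a\<bar>
            \<le> 2 ^ (c * (bitlen (n + length es) + bitlen (nat \<bar>t\<bar>) + 1))) \<and>
       (case decode (snd (steps P k (init_state n es t))) of (n', es', t') \<Rightarrow>
          wf_graph n' es' \<and> connected_graph n' es' \<and>
          (int (diameter n es) \<ge> t \<longleftrightarrow> int (diameter n' es') \<ge> t') \<and>
          inst_size n' es' t' \<le> c * inst_size n es t + c \<and>
          bisection_width n' es' + min_degree n' es' \<le> 2))"
proof (rule exI[of _ prog], rule exI[of _ 200], intro allI impI)
  fix n es and t :: int
  assume H: "wf_graph n es \<and> connected_graph n es"
  have np: "0 < n" using H by (simp add: connected_graph_def)
  have er: "\<forall>e\<in>set es. fst e < n \<and> snd e < n" using H unfolding wf_graph_def by fastforce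
  interpret G: Gr n es t
    by unfold_locales (use np er H in auto)
  let ?k = "125 * n + 45"
  have r: "run prog G.VV (0, encode n es t) ?k (141, G.Mf)" by (rule G.prog_run)
  have st: "steps prog ?k (init_state n es t) = (141, G.Mf)" using r by (simp add: run_def init_state_def)
  have hl: "halted prog (141, G.Mf)" by (simp add: halted_def prog_nth)
  have VVb: "G.VV \<le> 2 ^ (200 * (bitlen (n + length es) + bitlen (nat \<bar>t\<bar>) + 1))"
  proof -
    have "G.VV = int (30 * (n + length es) + nat \<bar>t\<bar> + 30)" by (simp add: G.VV_def)
    also have "\<dots> \<le> int (2 ^ (200 * (bitlen (n + length es) + bitlen (nat \<bar>t\<bar>) + 1)))"
      using pow_bound[of "n + length es" "nat \<bar>t\<bar>"] by linarith
    finally show ?thesis by simp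
  qed
  have bd: "\<forall>j \<le> ?k. \<forall>a. \<bar>snd (steps prog j (init_state n es t)) a\<bar>
            \<le> 2 ^ (200 * (bitlen (n + length es) + bitlen (nat \<bar>t\<bar>) + 1))"
    using r VVb unfolding run_def bnd_def init_state_def by (meson order_trans)
  have dec: "decode (snd (steps prog ?k (init_state n es t))) = (G.N2, G.E2, t + 4)"
    using st G.decode_Mf by (simp add: G.N2_def G.E2_def)
  have isz: "inst_size G.N2 G.E2 (t + 4) \<le> 200 * inst_size n es t + 200"
  proof -
    have "nat \<bar>t + 4\<bar> \<le> nat \<bar>t\<bar> + 4" by linarith
    then have "bitlen (nat \<bar>t + 4\<bar>) \<le> bitlen (nat \<bar>t\<bar>) + 4"
      using bitlen_mono bitlen_add order_trans by blast
    moreover have "length G.E2 = length es + 5 * n + 1" by (simp add: G.E2_def)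
    ultimately show ?thesis unfolding inst_size_def G.N2_def by simp
  qed
  have eqv: "(int (diameter n es) \<ge> t \<longleftrightarrow> int (diameter G.N2 G.E2) \<ge> t + 4)"
    using G.diam2 by simp
  show "\<exists>k \<le> 200 * (n + length es + 1).
       halted prog (steps prog k (init_state n es t)) \<and>
       (\<forall>j \<le> k. \<forall>a. \<bar>snd (steps prog j (init_state n es t)) a\<bar>
            \<le> 2 ^ (200 * (bitlen (n + length es) + bitlen (nat \<bar>t\<bar>) + 1))) \<and>
       (case decode (snd (steps prog k (init_state n es t))) of (n', es', t') \<Rightarrow>
          wf_graph n' es' \<and> connected_graph n' es' \<and>
          (int (diameter n es) \<ge> t \<longleftrightarrow> int (diameter n' es') \<ge> t') \<and>
          inst_size n' es' t' \<le> 200 * inst_size n es t + 200 \<and>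
          bisection_width n' es' + min_degree n' es' \<le> 2)"
  proof (intro exI conjI)
    show "?k \<le> 200 * (n + length es + 1)" by simp
    show "halted prog (steps prog ?k (init_state n es t))" using st hl by simp
    show "\<forall>j \<le> ?k. \<forall>a. \<bar>snd (steps prog j (init_state n es t)) a\<bar>
            \<le> 2 ^ (200 * (bitlen (n + length es) + bitlen (nat \<bar>t\<bar>) + 1))" by (rule bd)
    show "case decode (snd (steps prog ?k (init_state n es t))) of (n', es', t') \<Rightarrow>
          wf_graph n' es' \<and> connected_graph n' es' \<and>
          (int (diameter n es) \<ge> t \<longleftrightarrow> int (diameter n' es') \<ge> t') \<and>
          inst_size n' es' t' \<le> 200 * inst_size n es t + 200 \<and>
          bisection_width n' es' + min_degree n' es' \<le> 2"
      unfolding dec using G.wf2 G.conn2 eqv isz G.bw2 G.md2 by simp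
  qed
qed


end
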